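(* Let $\mathbf{X}\in\mathbb{R}^{d\times n}$, $\mathbf{W}^\star\in\mathbb{R}^{m\times d}$ and $\mathbf{Y}=\mathbf{W}^\star\mathbf{X}\in\mathbb{R}^{m\times n}$. Let $p=\operatorname{rank}(\mathbf{Y})$ and let $\sigma_1^\star\ge\sigma_2^\star\ge\dots\ge\sigma_p^\star>0$ be the nonzero singular values of $\mathbf{Y}$, with $\sigma_k^\star:=0$ for $k>p$. Let $1\le r\le p$ and let $\{(\mathbf{a}_k,\mathbf{b}_k)\}_{k=1}^r$ be the output of the Inexact Sequential Low-Rank procedure (described in the context) applied to $(\mathbf{X},\mathbf{Y})$ with target rank $r$, and let $\bm{\delta}_k$ be the corresponding numerical errors, with $\|\bm{\delta}_k\|_F>0$ for $k=1,\dots,r$ and the convention $\|\bm{\delta}_0\|_F:=0$. For $1\le k\le r$ define $$\mathcal{T}_k^\star:=\min\Big\{\min_{k<j\le p}|\sigma_k^\star-\sigma_j^\star|,\ \sigma_k^\star\Big\},\qquad E(k):=\sigma_{\max}(\mathbf{X})\sum_{k'=0}^{k-1}\|\bm{\delta}_{k'}\|_F\prod_{j=k'+1}^{k-1}\Big(2+\frac{6\sigma_j^\star}{\mathcal{T}_k^\star}\Big).$$ If $E(k)<\tfrac12\min_{k<j\le p}|\sigma_k^\star-\sigma_j^\star|$ for every $k\in\{1,\dots,r\}$, then $$\Big\|\mathbf{Y}-\sum_{k=1}^r\mathbf{b}_k\mathbf{a}_k^\top\mathbf{X}\Big\|_F\le\sum_{k=r+1}^{p}\sigma_k^\star+\s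igma_{\max}(\mathbf{X})\sum_{k=1}^{r}\sum_{k'=0}^{k}\|\bm{\delta}_{k'}\|_F\prod_{j=k'+1}^{k}\Big(2+\frac{6\sigma_j^\star}{\mathcal{T}_k^\star}\Big).$$
   Context: $\sigma_{\max}(\mathbf{X})$ is the largest singular value of $\mathbf{X}$; $\|\cdot\|_F$ is the Frobenius norm. Inexact Sequential Low-Rank procedure: set $\mathbf{Y}_1:=\mathbf{Y}$; for $k=1,\dots,r$, obtain vectors $\mathbf{a}_k\in\mathbb{R}^d,\mathbf{b}_k\in\mathbb{R}^m$ from an arbitrary (approximate) rank-1 solver applied to $(\mathbf{Y}_k,\mathbf{X})$, and set $\mathbf{Y}_{k+1}:=\mathbf{Y}_k-\mathbf{b}_k\mathbf{a}_k^\top\mathbf{X}$. Numerical error: for each $k$, let $(\overline{\mathbf{a}}_k,\overline{\mathbf{b}}_k)\in\arg\min_{\mathbf{a}\in\mathbb{R}^d,\mathbf{b}\in\mathbb{R}^m}\tfrac12\|\mathbf{Y}_k-\mathbf{b}\mathbf{a}^\top\mathbf{X}\|_F^2$ be an exact minimizer, and $\bm{\delta}_k:=\mathbf{b}_k\mathbf{a}_k^\top-\overline{\mathbf{b}}_k\overline{\mathbf{a}}_k^\top\in\mathbb{R}^{m\times d}$. *)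

theory Defs
  imports "HOL-Analysis.Analysis"
begin

text \<open>Matrices are HOL-Analysis matrices: R^{m x n} is real^'n^'m.
  The norm on real^'n^'m is the Frobenius norm.\<close>

definition outer :: "real^'m \<Rightarrow> real^'d \<Rightarrow> real^'d^'m" where
  "outer b a = (\<chi> i j. b $ i * a $ j)"

text \<open>sigma (indexed from 1) is the sequence of singular values of Y:
  sigma_1 >= ... >= sigma_p > 0 with p = rank Y, sigma_k = 0 for k > p, and
  Y = sum_{k=1}^p sigma_k u_k v_k^T for orthonormal families (u_k), (v_k) (an SVD).\<close>
definition singular_values :: "real^'n^'m \<Rightarrow> (nat \<Rightarrow> real) \<Rightarrow> bool" where
  "singular_values Y \<sigma> \<longleftrightarrow>
     (\<forall>k. k > rank Y \<longrightarrow> \<sigma> k = 0) \<and>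
     (\<forall>k\<in>{1..rank Y}. \<sigma> k > 0) \<and>
     (\<forall>j\<in>{1..rank Y}. \<forall>k\<in>{1..rank Y}. j \<le> k \<longrightarrow> \<sigma> k \<le> \<sigma> j) \<and>
     (\<exists>(u :: nat \<Rightarrow> real^'m) (v :: nat \<Rightarrow> real^'n).
        (\<forall>j\<in>{1..rank Y}. \<forall>k\<in>{1..rank Y}. u j \<bullet> u k = (if j = k then 1 else 0)) \<and>
        (\<forall>j\<in>{1..rank Y}. \<forall>k\<in>{1..rank Y}. v j \<bullet> v k = (if j = k then 1 else 0)) \<and>
        Y = (\<Sum>k\<in>{1..rank Y}. \<sigma> k *\<^sub>R outer (u k) (v k)))"

text \<open>Residuals of the Sequential Low-Rank procedure:
  seq_resid X Y a b (k-1) is Y_k, i.e. Y_1 = Y and Y_{k+1} = Y_k - b_k a_k^T X.\<close>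
primrec seq_resid :: "real^'n^'d \<Rightarrow> real^'n^'m \<Rightarrow> (nat \<Rightarrow> real^'d) \<Rightarrow> (nat \<Rightarrow> real^'m)
    \<Rightarrow> nat \<Rightarrow> real^'n^'m" where
  "seq_resid X Y a b 0 = Y"
| "seq_resid X Y a b (Suc k) = seq_resid X Y a b k - outer (b (Suc k)) (a (Suc k)) ** X"

definition exact_rank1_min :: "real^'n^'m \<Rightarrow> real^'n^'d \<Rightarrow> real^'d \<Rightarrow> real^'m \<Rightarrow> bool" where
  "exact_rank1_min Yk X a' b' \<longleftrightarrow>
     (\<forall>a b. 1/2 * (norm (Yk - outer b' a' ** X))\<^sup>2 \<le> 1/2 * (norm (Yk - outer b a ** X))\<^sup>2)"

text \<open>T*_k = min { min_{k<j<=p} |sigma_k - sigma_j|, sigma_k } (inner min over empty set = +infinity).\<close>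
definition Tstar :: "(nat \<Rightarrow> real) \<Rightarrow> nat \<Rightarrow> nat \<Rightarrow> real" where
  "Tstar \<sigma> p k = Min ({\<bar>\<sigma> k - \<sigma> j\<bar> | j. k < j \<and> j \<le> p} \<union> {\<sigma> k})"

end

theory Submission
  imports Defs
begin


lemma outer_nth[simp]: "outer q x $ i $ j = q $ i * x $ j"
  by (simp add: outer_def)

lemma vm_outer: "w v* outer q x = (w \<bullet> q) *\<^sub>R x"
  by (simp add: vec_eq_iff vector_matrix_mult_def inner_vec_def sum_distrib_right mult.assoc)

lemma vm_add: "w v* (A + B) = w v* A + w v* (B::real^'n^'m)"
  by (simp add: vec_eq_iff vector_matrix_mult_def distrib_left sum.distrib)

lemma vm_diff: "w v* (A - B) = w v* A - w v* (B::real^'n^'m)"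
  by (simp add: vec_eq_iff vector_matrix_mult_def right_diff_distrib sum_subtractf)

lemma vm_scale: "w v* (c *\<^sub>R A) = c *\<^sub>R (w v* (A::real^'n^'m))"
  by (simp add: vec_eq_iff vector_matrix_mult_def sum_distrib_left algebra_simps)

lemma vm_sum: "w v* (sum f S) = (\<Sum>k\<in>S. w v* (f k :: real^'n^'m))"
  by (induction S rule: infinite_finite_induct) (auto simp: vm_add)

lemma vm_neg: "w v* (- A) = - (w v* (A::real^'n^'m))"
  by (simp add: vec_eq_iff vector_matrix_mult_def sum_negf)

lemma outer_add: "outer q (x + y) = outer q x + outer q y"
  by (simp add: vec_eq_iff distrib_left)

lemma outer_neg: "outer q (- x) = - outer q x"
  by (simp add: vec_eq_iff)

lemma outer_scaleR_left: "outer (t *\<^sub>R q) x = t *\<^sub>R outer q x"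
  by (simp add: vec_eq_iff)

lemma outer_mult: "outer b a ** X = outer b (a v* X)"
  by (simp add: vec_eq_iff matrix_matrix_mult_def vector_matrix_mult_def sum_distrib_left mult.assoc)

lemma mm_add: "(A + B) ** (X::real^'n^'d) = A ** X + (B::real^'d^'m) ** X"
  by (simp add: vec_eq_iff matrix_matrix_mult_def distrib_right sum.distrib)

lemma mm_diff: "(A - B) ** (X::real^'n^'d) = A ** X - (B::real^'d^'m) ** X"
  by (simp add: vec_eq_iff matrix_matrix_mult_def left_diff_distrib sum_subtractf)

lemma mm_scale: "(c *\<^sub>R A) ** (X::real^'n^'d) = c *\<^sub>R ((A::real^'d^'m) ** X)"
  by (simp add: vec_eq_iff matrix_matrix_mult_def sum_distrib_left algebra_simps)

lemma inner_outer_outer: "inner (outer q x) (outer q' y) = (q \<bullet> q') * (x \<bullet> y)"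
proof -
  have "inner (outer q x) (outer q' y) = (\<Sum>i\<in>UNIV. \<Sum>j\<in>UNIV. (q$i * x$j) * (q'$i * y$j))"
    by (simp add: inner_vec_def)
  also have "\<dots> = (\<Sum>i\<in>UNIV. \<Sum>j\<in>UNIV. (q$i * q'$i) * (x$j * y$j))"
    by (simp add: mult_ac)
  also have "\<dots> = (q \<bullet> q') * (x \<bullet> y)"
    by (simp add: inner_vec_def sum_product)
  finally show ?thesis .
qed

lemma inner_mat_outer: "inner (N::real^'n^'m) (outer q x) = (q v* N) \<bullet> x"
  apply (simp add: inner_vec_def vector_matrix_mult_def sum_distrib_right sum_distrib_left)
  apply (subst sum.swap)
  apply (simp add: algebra_simps)
  done

lemma norm_outer: "norm (outer q x) = norm q * norm x"
proof -
  have "(norm (outer q x))\<^sup>2 = (norm q * norm x)\<^sup>2"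
    by (simp add: power2_norm_eq_inner inner_outer_outer power_mult_distrib)
  thus ?thesis by (simp add: power2_eq_iff_nonneg)
qed

lemma row_mm: "(A ** X) $ i = A $ i v* X"
  by (simp add: vec_eq_iff matrix_matrix_mult_def vector_matrix_mult_def)

lemma vm_col: "(q v* M) $ j = q \<bullet> column j M"
  by (simp add: vector_matrix_mult_def column_def inner_vec_def)


definition orthon :: "'a::real_inner set \<Rightarrow> bool" where
  "orthon F \<longleftrightarrow> pairwise orthogonal F \<and> (\<forall>q\<in>F. norm q = 1)"

lemma orthon_inner:
  assumes "orthon F" "q \<in> F" "q' \<in> F"
  shows "q \<bullet> q' = (if q = q' then 1 else 0)"
proof (cases "q = q'")
  case True
  then have "norm q = 1" using assms by (auto simp: orthon_def)
  then show ?thesis using True by (simp add: dot_square_norm)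
next
  case False
  then show ?thesis using assms by (auto simp: orthon_def pairwise_def orthogonal_def)
qed

lemma norm_sum_orth:
  fixes e :: "'k \<Rightarrow> 'a::real_inner"
  assumes "finite K" "\<forall>j\<in>K. \<forall>k\<in>K. e j \<bullet> e k = (if j = k then 1 else 0)"
  shows "(norm (\<Sum>k\<in>K. c k *\<^sub>R e k))\<^sup>2 = (\<Sum>k\<in>K. (c k)\<^sup>2)"
proof -
  have "(norm (\<Sum>k\<in>K. c k *\<^sub>R e k))\<^sup>2 = (\<Sum>k\<in>K. c k * (\<Sum>j\<in>K. c j * (e j \<bullet> e k)))"
    by (simp add: power2_norm_eq_inner inner_sum_left inner_sum_right)
  also have "\<dots> = (\<Sum>k\<in>K. c k * (\<Sum>j\<in>K. (if j = k then c j else 0)))"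
    by (rule sum.cong[OF refl], rule arg_cong[where f="\<lambda>t. _ * t"], rule sum.cong[OF refl]) (simp add: assms(2))
  also have "\<dots> = (\<Sum>k\<in>K. (c k)\<^sup>2)"
    using assms(1) by (simp add: power2_eq_square)
  finally show ?thesis .
qed

definition pv :: "'a::real_inner set \<Rightarrow> 'a \<Rightarrow> 'a" where
  "pv F x = (\<Sum>q\<in>F. (q \<bullet> x) *\<^sub>R q)"

lemma pv_orth:
  assumes "orthon F" "finite F" "f \<in> F"
  shows "f \<bullet> (x - pv F x) = 0"
proof -
  have "f \<bullet> pv F x = (\<Sum>q\<in>F. (q \<bullet> x) * (f \<bullet> q))"
    by (simp add: pv_def inner_sum_right)
  also have "\<dots> = (\<Sum>q\<in>F. (if f = q then q \<bullet> x else 0))"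
    by (rule sum.cong[OF refl]) (simp add: orthon_inner[OF assms(1) assms(3)])
  also have "\<dots> = f \<bullet> x" using assms by simp
  finally show ?thesis by (simp add: inner_diff_right)
qed

lemma pv_span: "pv F x \<in> span F"
  unfolding pv_def by (intro span_sum span_scale span_base)

lemma pv_orth_span:
  assumes "orthon F" "finite F" "y \<in> span F"
  shows "y \<bullet> (x - pv F x) = 0"
proof -
  have "orthogonal (x - pv F x) y"
    by (rule orthogonal_to_span[OF assms(3)])
       (use pv_orth[OF assms(1,2)] in \<open>auto simp: orthogonal_def inner_commute\<close>)
  thus ?thesis by (simp add: orthogonal_def inner_commute)
qed

lemma pv_unique:
  assumes "orthon F" "finite F" "orthon G" "finite G" "span F = span G"
  shows "pv F x = pv G x"
proof -
  let ?d = "pv F x - pv G x"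
  have d: "?d \<in> span F" using pv_span[of F x] pv_span[of G x] assms(5) by (simp add: span_diff)
  have 1: "?d \<bullet> (x - pv F x) = 0" by (rule pv_orth_span[OF assms(1,2) d])
  have 2: "?d \<bullet> (x - pv G x) = 0" using d assms(5) by (intro pv_orth_span[OF assms(3,4)]) auto
  have "?d \<bullet> ?d = ?d \<bullet> (x - pv G x) - ?d \<bullet> (x - pv F x)" by (simp add: inner_diff_right)
  then have "?d \<bullet> ?d = 0" using 1 2 by simp
  thus ?thesis by simp
qed

lemma norm_pv:
  assumes "orthon F" "finite F"
  shows "(norm (pv F x))\<^sup>2 = (\<Sum>q\<in>F. (q \<bullet> x)\<^sup>2)"
  unfolding pv_def
  using norm_sum_orth[of F id "\<lambda>q. q \<bullet> x"] assms orthon_inner[OF assms(1)] by simp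

lemma norm_vm_sq: fixes M :: "real^'n^'m" shows "(norm (q v* M))\<^sup>2 = (\<Sum>j\<in>UNIV. (q \<bullet> column j M)\<^sup>2)"
proof -
  have "(norm (q v* M))\<^sup>2 = (\<Sum>j\<in>UNIV. ((q v* M) $ j)\<^sup>2)"
    apply (subst power2_norm_eq_inner)
    apply (simp add: inner_vec_def power2_eq_square)
    done
  then show ?thesis by (simp only: vm_col)
qed

lemma sum_vm_inv:
  fixes M :: "real^'n^'m"
  assumes "orthon F" "finite F" "orthon G" "finite G" "span F = span G"
  shows "(\<Sum>q\<in>F. (norm (q v* M))\<^sup>2) = (\<Sum>q\<in>G. (norm (q v* M))\<^sup>2)"
proof -
  have "(\<Sum>q\<in>F. (norm (q v* M))\<^sup>2) = (\<Sum>j\<in>UNIV. (norm (pv F (column j M)))\<^sup>2)"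
    by (simp add: norm_vm_sq norm_pv[OF assms(1,2)] sum.swap[of _ F])
  also have "\<dots> = (\<Sum>j\<in>UNIV. (norm (pv G (column j M)))\<^sup>2)"
    using pv_unique[OF assms] by simp
  also have "\<dots> = (\<Sum>q\<in>G. (norm (q v* M))\<^sup>2)"
    by (simp add: norm_vm_sq norm_pv[OF assms(3,4)] sum.swap[of _ G])
  finally show ?thesis .
qed

lemma norm_diff_sq: "(norm (x - y))\<^sup>2 = x \<bullet> x - 2 * (x \<bullet> y) + y \<bullet> (y::'a::real_inner)"
  by (simp add: power2_norm_eq_inner inner_diff_left inner_diff_right inner_commute)

definition PM :: "(real^'m) set \<Rightarrow> real^'n^'m \<Rightarrow> real^'n^'m" where
  "PM F N = (\<Sum>q\<in>F. outer q (q v* N))"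

lemma resid_sq:
  assumes "orthon F" "finite F"
  shows "(norm (N - PM F N))\<^sup>2 = (norm N)\<^sup>2 - (\<Sum>q\<in>F. (norm (q v* N))\<^sup>2)"
proof -
  have a: "N \<bullet> PM F N = (\<Sum>q\<in>F. (norm (q v* N))\<^sup>2)"
    unfolding PM_def inner_sum_right inner_mat_outer power2_norm_eq_inner ..
  have "PM F N \<bullet> PM F N = (\<Sum>q\<in>F. \<Sum>q'\<in>F. (q' \<bullet> q) * ((q' v* N) \<bullet> (q v* N)))"
    by (simp add: PM_def inner_sum_right inner_sum_left inner_outer_outer)
  also have "\<dots> = (\<Sum>q\<in>F. \<Sum>q'\<in>F. (if q' = q then (norm (q v* N))\<^sup>2 else 0))"
    by (rule sum.cong[OF refl], rule sum.cong[OF refl])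
       (simp add: orthon_inner[OF assms(1)] power2_norm_eq_inner)
  also have "\<dots> = (\<Sum>q\<in>F. (norm (q v* N))\<^sup>2)" using assms(2) by simp
  finally have b: "PM F N \<bullet> PM F N = (\<Sum>q\<in>F. (norm (q v* N))\<^sup>2)" .
  have "(norm (N - PM F N))\<^sup>2 = N \<bullet> N - 2 * (N \<bullet> PM F N) + PM F N \<bullet> PM F N"
    by (rule norm_diff_sq)
  then show ?thesis using a b by (simp add: power2_norm_eq_inner)
qed

lemma PM_add: "PM F (N + D) = PM F N + PM F D"
  by (simp add: PM_def vm_add outer_add sum.distrib)

lemma resid_le:
  assumes "orthon F" "finite F"
  shows "norm (D - PM F D) \<le> norm D"
proof -
  have "(norm (D - PM F D))\<^sup>2 \<le> (norm D)\<^sup>2"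
    using resid_sq[OF assms, of D] by (simp add: sum_nonneg)
  thus ?thesis by (rule power2_le_imp_le) simp
qed



lemma exchange:
  fixes M :: "real^'n^'m" and u :: "real^'m"
  assumes orth: "orthon F" and fin: "finite F" and card: "card F \<le> Suc s"
    and bound: "\<forall>w. norm w = 1 \<longrightarrow> (norm (w v* M))\<^sup>2 \<le> c"
  shows "\<exists>F'. orthon F' \<and> finite F' \<and> card F' \<le> s \<and> (\<forall>q\<in>F'. q \<bullet> u = 0) \<and>
          (\<Sum>q\<in>F. (norm (q v* M))\<^sup>2) \<le> c + (\<Sum>q\<in>F'. (norm (q v* M))\<^sup>2)"
proof -
  define z where "z = pv F u"
  have zspan: "z \<in> span F" using pv_span z_def by simp
  have zorth: "\<And>y. y \<in> span F \<Longrightarrow> y \<bullet> (u - z) = 0"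
    using pv_orth_span[OF orth fin] z_def by simp
  have c0: "0 \<le> c"
    using bound[rule_format, of "axis undefined 1"] by (smt (verit) zero_le_power2 norm_axis_1)
  show ?thesis
  proof (cases "z = 0")
    case True
    then have Fu: "\<forall>q\<in>F. q \<bullet> u = 0" using zorth span_base by fastforce
    show ?thesis
    proof (cases "card F \<le> s")
      case True
      then show ?thesis using Fu orth fin c0 by (intro exI[of _ F]) auto
    next
      case False
      then have "F \<noteq> {}" by auto
      then obtain q0 where q0: "q0 \<in> F" by blast
      have o': "orthon (F - {q0})" using orth by (auto simp: orthon_def pairwise_def)
      have c': "card (F - {q0}) \<le> s" using q0 card fin by simp
      have "(\<Sum>q\<in>F. (norm (q v* M))\<^sup>2) = (norm (q0 v* M))\<^sup>2 + (\<Sum>q\<in>F - {q0}. (norm (q v* M))\<^sup>2)"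
        using q0 fin by (simp add: sum.remove)
      moreover have "(norm (q0 v* M))\<^sup>2 \<le> c" using bound q0 orth by (auto simp: orthon_def)
      ultimately show ?thesis using o' c' Fu fin by (intro exI[of _ "F - {q0}"]) auto
    qed
  next
    case False
    define S where "S = {x \<in> span F. x \<bullet> u = 0}"
    have subS: "subspace S" unfolding subspace_def S_def
      by (auto simp: span_zero span_add span_scale inner_add_left)
    obtain G0 where G0: "G0 \<subseteq> S" "pairwise orthogonal G0" "\<And>x. x\<in>G0 \<Longrightarrow> norm x = 1"
      "independent G0" "card G0 = dim S" "span G0 = S"
      using orthonormal_basis_subspace[OF subS] by blast
    have finG0: "finite G0" using G0(4) finiteI_independent by blast
    define zh where "zh = inverse (norm z) *\<^sub>R z"
    have nz: "norm z > 0" using False by simp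
    have zz: "z \<bullet> u = z \<bullet> z" using zorth[OF zspan] by (simp add: inner_diff_right)
    have zhu: "zh \<bullet> u = norm z"
      using zz nz by (simp add: zh_def dot_square_norm power2_eq_square)
    have zh_span: "zh \<in> span F" using zspan by (simp add: zh_def span_scale)
    have normzh: "norm zh = 1" using nz by (simp add: zh_def)
    have zh_notin: "zh \<notin> G0" using G0(1) zhu nz by (auto simp: S_def)
    have zh_orth: "\<And>x. x \<in> G0 \<Longrightarrow> zh \<bullet> x = 0"
    proof -
      fix x assume "x \<in> G0"
      then have x: "x \<in> span F" "x \<bullet> u = 0" using G0(1) by (auto simp: S_def)
      have "x \<bullet> (u - z) = 0" using zorth[OF x(1)] .
      then have "x \<bullet> z = 0" using x(2) by (simp add: inner_diff_right)
      then show "zh \<bullet> x = 0" by (simp add: zh_def inner_commute)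
    qed
    define G where "G = insert zh G0"
    have orthG: "orthon G" unfolding orthon_def G_def
      using G0(2,3) normzh zh_orth
      by (auto simp: pairwise_insert orthogonal_def inner_commute)
    have finG: "finite G" using finG0 by (simp add: G_def)
    have sub1: "span G \<subseteq> span F"
      by (rule span_minimal) (use zh_span G0(1) in \<open>auto simp: G_def S_def subspace_span\<close>)
    have sub2: "span F \<subseteq> span G"
    proof (rule span_minimal[OF _ subspace_span], rule subsetI)
      fix x assume xF: "x \<in> F"
      then have xs: "x \<in> span F" by (simp add: span_base)
      define y where "y = x - (x \<bullet> zh) *\<^sub>R zh"
      have ys: "y \<in> span F" using xs zh_span by (simp add: y_def span_diff span_scale)
      have xu: "x \<bullet> u = x \<bullet> z" using zorth[OF xs] by (simp add: inner_diff_right)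
      have "y \<bullet> u = x \<bullet> u - (x \<bullet> zh) * norm z" by (simp add: y_def inner_diff_left zhu)
      also have "\<dots> = 0" using xu nz by (simp add: zh_def)
      finally have "y \<in> S" using ys by (simp add: S_def)
      then have "y \<in> span G" using G0(6) span_mono[of G0 G] by (auto simp: G_def)
      moreover have "zh \<in> span G" by (simp add: G_def span_base)
      ultimately have "y + (x \<bullet> zh) *\<^sub>R zh \<in> span G" by (simp add: span_add span_scale)
      then show "x \<in> span G" by (simp add: y_def)
    qed
    have spanGF: "span G = span F" using sub1 sub2 by blast
    have indF: "independent F"
      using orth by (intro pairwise_orthogonal_independent) (auto simp: orthon_def)
    have indG: "independent G"
      using orthG by (intro pairwise_orthogonal_independent) (auto simp: orthon_def)
    have "card G = card F"
      using dim_span_eq_card_independent[OF indF] dim_span_eq_card_independent[OF indG] spanGF by simp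
    then have cG0: "card G0 \<le> s" using card zh_notin finG0 by (simp add: G_def)
    have "(\<Sum>q\<in>F. (norm (q v* M))\<^sup>2) = (\<Sum>q\<in>G. (norm (q v* M))\<^sup>2)"
      by (rule sum_vm_inv[OF orth fin orthG finG spanGF[symmetric]])
    also have "\<dots> = (norm (zh v* M))\<^sup>2 + (\<Sum>q\<in>G0. (norm (q v* M))\<^sup>2)"
      using finG0 zh_notin by (simp add: G_def)
    also have "\<dots> \<le> c + (\<Sum>q\<in>G0. (norm (q v* M))\<^sup>2)" using bound normzh by simp
    finally have "(\<Sum>q\<in>F. (norm (q v* M))\<^sup>2) \<le> c + (\<Sum>q\<in>G0. (norm (q v* M))\<^sup>2)" .
    moreover have "orthon G0" using G0(2,3) by (simp add: orthon_def)
    moreover have "\<forall>q\<in>G0. q \<bullet> u = 0" using G0(1) by (auto simp: S_def)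
    ultimately show ?thesis using finG0 cG0 by blast
  qed
qed



lemma quad_min:
  fixes m bb :: real
  assumes bb: "0 \<le> bb" and H: "\<forall>t. - 2 * m + bb \<le> - 2 * t * m + t\<^sup>2 * bb"
  shows "m = bb"
proof -
  define d where "d = m - bb"
  define h where "h = d / (bb + 1)"
  have "- 2 * m + bb \<le> - 2 * (1 + h) * m + (1 + h)\<^sup>2 * bb" using H by blast
  then have "0 \<le> - 2 * h * d + h\<^sup>2 * bb" by (simp add: d_def power2_eq_square algebra_simps)
  then have "0 \<le> (- 2 * h * d + h\<^sup>2 * bb) * (bb + 1)\<^sup>2" using bb by simp
  also have "(- 2 * h * d + h\<^sup>2 * bb) * (bb + 1)\<^sup>2 = - 2 * d * (h * (bb + 1)) * (bb + 1) + (h * (bb + 1))\<^sup>2 * bb"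
    by (simp add: power2_eq_square algebra_simps)
  also have "h * (bb + 1) = d" using bb by (simp add: h_def)
  also have "- 2 * d * d * (bb + 1) + d\<^sup>2 * bb = - (d\<^sup>2 * (bb + 2))"
    by (simp add: power2_eq_square algebra_simps)
  finally have "d\<^sup>2 * (bb + 2) \<le> 0" by simp
  then have "d\<^sup>2 \<le> 0" using bb by (simp add: mult_le_0_iff)
  then show ?thesis by (simp add: d_def)
qed

lemma rank1_facts:
  fixes M :: "real^'n^'m" and X :: "real^'n^'d" and W :: "real^'d^'m"
  assumes MW: "M = W ** X" and opt: "exact_rank1_min M X a' b'"
  shows "(norm (M - outer b' a' ** X))\<^sup>2 = (norm M)\<^sup>2 - (norm (outer b' a' ** X))\<^sup>2"
    and "\<And>w. norm w = 1 \<Longrightarrow> (norm (w v* M))\<^sup>2 \<le> (norm (outer b' a' ** X))\<^sup>2"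
    and "\<And>w. w \<bullet> b' = 0 \<Longrightarrow> w v* (M - outer b' a' ** X) = w v* M"
proof -
  define B where "B = outer b' a' ** X"
  have opt': "\<And>a b. (norm (M - B))\<^sup>2 \<le> (norm (M - outer b a ** X))\<^sup>2"
    using opt by (simp add: exact_rank1_min_def B_def)
  have "\<forall>t. - 2 * (M \<bullet> B) + B \<bullet> B \<le> - 2 * t * (M \<bullet> B) + t\<^sup>2 * (B \<bullet> B)"
  proof
    fix t :: real
    have "outer (t *\<^sub>R b') a' ** X = t *\<^sub>R B" by (simp add: B_def outer_scaleR_left mm_scale)
    then have "(norm (M - B))\<^sup>2 \<le> (norm (M - t *\<^sub>R B))\<^sup>2" using opt'[of "t *\<^sub>R b'" a'] by simp
    then have "M \<bullet> M - 2 * (M \<bullet> B) + B \<bullet> B \<le> M \<bullet> M - 2 * (M \<bullet> (t *\<^sub>R B)) + (t *\<^sub>R B) \<bullet> (t *\<^sub>R B)"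
      by (simp only: norm_diff_sq)
    then show "- 2 * (M \<bullet> B) + B \<bullet> B \<le> - 2 * t * (M \<bullet> B) + t\<^sup>2 * (B \<bullet> B)"
      by (simp add: power2_eq_square algebra_simps)
  qed
  then have mB: "M \<bullet> B = B \<bullet> B" by (intro quad_min) auto
  show 1: "(norm (M - outer b' a' ** X))\<^sup>2 = (norm M)\<^sup>2 - (norm (outer b' a' ** X))\<^sup>2"
    using mB unfolding B_def[symmetric] norm_diff_sq by (simp add: power2_norm_eq_inner)
  show "(norm (w v* M))\<^sup>2 \<le> (norm (outer b' a' ** X))\<^sup>2" if w: "norm w = 1" for w
  proof -
    have "outer w (w v* W) ** X = outer w (w v* M)"
      by (simp add: outer_mult MW vector_matrix_mul_assoc)
    also have "\<dots> = PM {w} M" by (simp add: PM_def)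
    finally have e: "outer w (w v* W) ** X = PM {w} M" .
    have ow: "orthon {w}" using w by (simp add: orthon_def)
    have "(norm (M - B))\<^sup>2 \<le> (norm (M - PM {w} M))\<^sup>2" using opt'[of w "w v* W"] e by simp
    also have "\<dots> = (norm M)\<^sup>2 - (norm (w v* M))\<^sup>2" using resid_sq[OF ow] by simp
    finally show ?thesis using 1 by (simp add: B_def)
  qed
  show "w v* (M - outer b' a' ** X) = w v* M" if "w \<bullet> b' = 0" for w
    using that by (simp add: vm_diff outer_mult vm_outer)
qed

definition Phi :: "nat \<Rightarrow> real^'n^'m \<Rightarrow> real" where
  "Phi s N = Inf ((\<lambda>F. norm (N - PM F N)) ` {F. orthon F \<and> finite F \<and> card F \<le> s})"

lemma Phi_le: "orthon F \<Longrightarrow> finite F \<Longrightarrow> card F \<le> s \<Longrightarrow> Phi s N \<le> norm (N - PM F N)"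
  unfolding Phi_def by (rule cInf_lower) (auto intro: bdd_belowI[where m=0])

lemma Phi_ge:
  assumes "\<And>F. orthon F \<Longrightarrow> finite F \<Longrightarrow> card F \<le> s \<Longrightarrow> c \<le> norm (N - PM F N)"
  shows "c \<le> Phi s N"
  unfolding Phi_def
proof (rule cInf_greatest)
  have "{} \<in> {F. orthon F \<and> finite F \<and> card F \<le> s}" by (simp add: orthon_def)
  then show "(\<lambda>F. norm (N - PM F N)) ` {F. orthon F \<and> finite F \<and> card F \<le> s} \<noteq> {}" by blast
qed (use assms in auto)

lemma Phi0: "Phi 0 N = norm N"
proof (rule antisym)
  show "Phi 0 N \<le> norm N" using Phi_le[of "{}" 0 N] by (simp add: orthon_def PM_def)
  show "norm N \<le> Phi 0 N" by (rule Phi_ge) (simp add: PM_def)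
qed

lemma Phi_pert: "Phi s (N + D) \<le> Phi s N + norm D"
proof -
  have "Phi s (N + D) - norm D \<le> Phi s N"
  proof (rule Phi_ge)
    fix F :: "(real^'b) set" assume F: "orthon F" "finite F" "card F \<le> s"
    have "Phi s (N + D) \<le> norm ((N + D) - PM F (N + D))" by (rule Phi_le[OF F])
    also have "(N + D) - PM F (N + D) = (N - PM F N) + (D - PM F D)" by (simp add: PM_add)
    also have "norm \<dots> \<le> norm (N - PM F N) + norm (D - PM F D)" by (rule norm_triangle_ineq)
    also have "\<dots> \<le> norm (N - PM F N) + norm D" using resid_le[OF F(1,2)] by simp
    finally show "Phi s (N + D) - norm D \<le> norm (N - PM F N)" by simp
  qed
  then show ?thesis by simp
qed

lemma Phi_step:
  fixes M :: "real^'n^'m" and X :: "real^'n^'d" and W :: "real^'d^'m"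
  assumes MW: "M = W ** X" and opt: "exact_rank1_min M X a' b'"
  shows "Phi s (M - outer b' a' ** X) \<le> Phi (Suc s) M"
proof (rule Phi_ge)
  define B where "B = outer b' a' ** X"
  note R = rank1_facts[OF MW opt, folded B_def]
  fix F :: "(real^'m) set" assume F: "orthon F" "finite F" "card F \<le> Suc s"
  obtain F' where F': "orthon F'" "finite F'" "card F' \<le> s" "\<forall>q\<in>F'. q \<bullet> b' = 0"
    "(\<Sum>q\<in>F. (norm (q v* M))\<^sup>2) \<le> (norm B)\<^sup>2 + (\<Sum>q\<in>F'. (norm (q v* M))\<^sup>2)"
    using exchange[OF F, of M "(norm B)\<^sup>2" b'] R(2) by blast
  have "(\<Sum>q\<in>F'. (norm (q v* (M - B)))\<^sup>2) = (\<Sum>q\<in>F'. (norm (q v* M))\<^sup>2)"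
    using F'(4) R(3) by simp
  then have "(norm ((M - B) - PM F' (M - B)))\<^sup>2 = (norm M)\<^sup>2 - (norm B)\<^sup>2 - (\<Sum>q\<in>F'. (norm (q v* M))\<^sup>2)"
    using resid_sq[OF F'(1,2), of "M - B"] R(1) by simp
  also have "\<dots> \<le> (norm (M - PM F M))\<^sup>2"
    using resid_sq[OF F(1,2), of M] F'(5) by simp
  finally have "norm ((M - B) - PM F' (M - B)) \<le> norm (M - PM F M)"
    by (rule power2_le_imp_le) simp
  then show "Phi s (M - outer b' a' ** X) \<le> norm (M - PM F M)"
    using Phi_le[OF F'(1,2,3), of "M - B"] by (simp add: B_def)
qed



lemma outer_scaleR_right: "outer q (c *\<^sub>R x) = c *\<^sub>R outer q x"
  by (simp add: vec_eq_iff)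

lemma sv_nonneg: "singular_values Y \<sigma> \<Longrightarrow> 1 \<le> j \<Longrightarrow> 0 \<le> \<sigma> j"
  unfolding singular_values_def
  by (metis atLeastAtMost_iff less_eq_real_def not_le)

lemma bessel:
  fixes w :: "'a::real_inner"
  assumes "finite K" "\<forall>j\<in>K. \<forall>k\<in>K. e j \<bullet> e k = (if j = k then 1 else 0)"
  shows "(\<Sum>k\<in>K. (w \<bullet> e k)\<^sup>2) \<le> (norm w)\<^sup>2"
proof -
  define s where "s = (\<Sum>k\<in>K. (w \<bullet> e k) *\<^sub>R e k)"
  have ss: "s \<bullet> s = (\<Sum>k\<in>K. (w \<bullet> e k)\<^sup>2)"
    using norm_sum_orth[OF assms, of "\<lambda>k. w \<bullet> e k"] by (simp add: s_def power2_norm_eq_inner)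
  have ws: "w \<bullet> s = (\<Sum>k\<in>K. (w \<bullet> e k)\<^sup>2)"
    by (simp add: s_def inner_sum_right power2_eq_square)
  have "0 \<le> (norm (w - s))\<^sup>2" by simp
  also have "\<dots> = w \<bullet> w - 2 * (w \<bullet> s) + s \<bullet> s" by (rule norm_diff_sq)
  finally show ?thesis using ss ws by (simp add: power2_norm_eq_inner)
qed

lemma opX:
  fixes X :: "real^'n^'d"
  assumes sv: "singular_values X \<sigma>"
  shows "norm (w v* X) \<le> \<sigma> 1 * norm w"
proof -
  obtain u :: "nat \<Rightarrow> real^'d" and v :: "nat \<Rightarrow> real^'n" where
    uo: "\<forall>j\<in>{1..rank X}. \<forall>k\<in>{1..rank X}. u j \<bullet> u k = (if j = k then 1 else 0)" and
    vo: "\<forall>j\<in>{1..rank X}. \<forall>k\<in>{1..rank X}. v j \<bullet> v k = (if j = k then 1 else 0)" and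
    X: "X = (\<Sum>k\<in>{1..rank X}. \<sigma> k *\<^sub>R outer (u k) (v k))"
    using sv unfolding singular_values_def by blast
  let ?K = "{1..rank X}"
  have s1: "0 \<le> \<sigma> 1" using sv_nonneg[OF sv] by simp
  have wX: "w v* X = (\<Sum>k\<in>?K. (\<sigma> k * (w \<bullet> u k)) *\<^sub>R v k)"
    by (subst X) (simp add: vm_sum vm_scale vm_outer)
  have "(norm (w v* X))\<^sup>2 = (\<Sum>k\<in>?K. (\<sigma> k * (w \<bullet> u k))\<^sup>2)"
    unfolding wX by (rule norm_sum_orth[OF _ vo]) simp
  also have "\<dots> \<le> (\<Sum>k\<in>?K. (\<sigma> 1)\<^sup>2 * (w \<bullet> u k)\<^sup>2)"
  proof (rule sum_mono)
    fix k assume k: "k \<in> ?K"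
    have "\<sigma> k \<le> \<sigma> 1" "0 < \<sigma> k" using sv k unfolding singular_values_def by auto
    then have "(\<sigma> k)\<^sup>2 \<le> (\<sigma> 1)\<^sup>2" by (simp add: power_mono)
    then show "(\<sigma> k * (w \<bullet> u k))\<^sup>2 \<le> (\<sigma> 1)\<^sup>2 * (w \<bullet> u k)\<^sup>2"
      by (simp add: power_mult_distrib mult_right_mono)
  qed
  also have "\<dots> = (\<sigma> 1)\<^sup>2 * (\<Sum>k\<in>?K. (w \<bullet> u k)\<^sup>2)" by (simp add: sum_distrib_left)
  also have "\<dots> \<le> (\<sigma> 1)\<^sup>2 * (norm w)\<^sup>2"
    by (rule mult_left_mono[OF bessel[OF _ uo]]) simp_all
  also have "\<dots> = (\<sigma> 1 * norm w)\<^sup>2" by (simp add: power_mult_distrib)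
  finally show ?thesis by (rule power2_le_imp_le) (intro mult_nonneg_nonneg s1 norm_ge_zero)
qed

lemma norm_mat_sq: "(norm (A::real^'n^'m))\<^sup>2 = (\<Sum>i\<in>UNIV. (norm (A $ i))\<^sup>2)"
  by (simp add: norm_vec_def L2_set_def sum_nonneg)

lemma matX:
  fixes X :: "real^'n^'d" and D :: "real^'d^'m"
  assumes sv: "singular_values X \<sigma>"
  shows "norm (D ** X) \<le> \<sigma> 1 * norm D"
proof -
  have s1: "0 \<le> \<sigma> 1" using sv_nonneg[OF sv] by simp
  have "(norm (D ** X))\<^sup>2 = (\<Sum>i\<in>UNIV. (norm (D $ i v* X))\<^sup>2)"
    by (simp add: norm_mat_sq row_mm)
  also have "\<dots> \<le> (\<Sum>i\<in>UNIV. (\<sigma> 1 * norm (D $ i))\<^sup>2)"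
    by (rule sum_mono, rule power_mono[OF opX[OF sv]]) simp
  also have "\<dots> = (\<sigma> 1 * norm D)\<^sup>2"
    by (simp add: power_mult_distrib norm_mat_sq[of D] sum_distrib_left)
  finally show ?thesis by (rule power2_le_imp_le) (intro mult_nonneg_nonneg s1 norm_ge_zero)
qed

lemma tail_bound:
  fixes Y :: "real^'n^'m"
  assumes sv: "singular_values Y \<sigma>" and r: "r \<le> rank Y"
  shows "Phi r Y \<le> (\<Sum>k=r+1..rank Y. \<sigma> k)"
proof -
  obtain u :: "nat \<Rightarrow> real^'m" and v :: "nat \<Rightarrow> real^'n" where
    uo: "\<forall>j\<in>{1..rank Y}. \<forall>k\<in>{1..rank Y}. u j \<bullet> u k = (if j = k then 1 else 0)" and
    vo: "\<forall>j\<in>{1..rank Y}. \<forall>k\<in>{1..rank Y}. v j \<bullet> v k = (if j = k then 1 else 0)" and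
    Y: "Y = (\<Sum>k\<in>{1..rank Y}. \<sigma> k *\<^sub>R outer (u k) (v k))"
    using sv unfolding singular_values_def by blast
  let ?K = "{1..rank Y}"
  have inj: "inj_on u {1..r}"
  proof (rule inj_onI)
    fix j k assume jk: "j \<in> {1..r}" "k \<in> {1..r}" "u j = u k"
    have kk: "u k \<bullet> u k = 1" using uo jk r by auto
    show "j = k"
    proof (rule ccontr)
      assume "j \<noteq> k"
      have "j \<in> ?K" "k \<in> ?K" using jk r by auto
      then have "u j \<bullet> u k = (if j = k then 1 else 0)" using uo by blast
      then have "u j \<bullet> u k = 0" using \<open>j \<noteq> k\<close> by simp
      with kk jk(3) show False by simp
    qed
  qed
  define F where "F = u ` {1..r}"
  have norm1: "\<And>k. k \<in> ?K \<Longrightarrow> norm (u k) = 1" using uo by (simp add: norm_eq_1)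
  have normv1: "\<And>k. k \<in> ?K \<Longrightarrow> norm (v k) = 1" using vo by (simp add: norm_eq_1)
  have oF: "orthon F"
    unfolding orthon_def F_def pairwise_def orthogonal_def using uo r norm1 by auto
  have fF: "finite F" by (simp add: F_def)
  have cF: "card F \<le> r" unfolding F_def using card_image_le[of "{1..r}" u] by simp
  have ui: "u i v* Y = \<sigma> i *\<^sub>R v i" if i: "i \<in> ?K" for i
  proof -
    have "u i v* Y = (\<Sum>k\<in>?K. (if i = k then \<sigma> k *\<^sub>R v k else 0))"
      apply (subst Y)
      apply (simp only: vm_sum vm_scale vm_outer)
      apply (rule sum.cong[OF refl])
      using uo i by auto
    also have "\<dots> = \<sigma> i *\<^sub>R v i" using i by simp
    finally show ?thesis .
  qed
  have "PM F Y = (\<Sum>i\<in>{1..r}. outer (u i) (u i v* Y))"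
    unfolding PM_def F_def using sum.reindex[OF inj, of "\<lambda>q. outer q (q v* Y)"] by (simp add: comp_def)
  also have "\<dots> = (\<Sum>i\<in>{1..r}. \<sigma> i *\<^sub>R outer (u i) (v i))"
    by (rule sum.cong[OF refl]) (use r in \<open>simp add: ui outer_scaleR_right\<close>)
  finally have P: "PM F Y = (\<Sum>i\<in>{1..r}. \<sigma> i *\<^sub>R outer (u i) (v i))" .
  have split: "?K = {1..r} \<union> {r+1..rank Y}" "{1..r} \<inter> {r+1..rank Y} = {}" using r by auto
  have "Y - PM F Y = (\<Sum>k\<in>{r+1..rank Y}. \<sigma> k *\<^sub>R outer (u k) (v k))"
    apply (subst (1) Y)
    unfolding P split(1) by (subst sum.union_disjoint) (use split(2) in auto)
  then have "norm (Y - PM F Y) \<le> (\<Sum>k\<in>{r+1..rank Y}. norm (\<sigma> k *\<^sub>R outer (u k) (v k)))"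
    by (simp only: norm_sum)
  also have "\<dots> = (\<Sum>k\<in>{r+1..rank Y}. \<sigma> k)"
  proof (rule sum.cong[OF refl])
    fix k assume k: "k \<in> {r+1..rank Y}"
    then have kK: "k \<in> ?K" by auto
    have "0 \<le> \<sigma> k" using sv_nonneg[OF sv] k by auto
    then show "norm (\<sigma> k *\<^sub>R outer (u k) (v k)) = \<sigma> k"
      using norm1[OF kK] normv1[OF kK] by (simp add: norm_outer)
  qed
  finally show ?thesis using Phi_le[OF oF fF cF, of Y] by simp
qed



theorem theorem1:
  fixes X :: "real^'n^'d" and Wstar :: "real^'d^'m" and Y :: "real^'n^'m"
    and \<sigma> :: "nat \<Rightarrow> real" and \<sigma>X :: "nat \<Rightarrow> real" and p r :: nat
    and a abar :: "nat \<Rightarrow> real^'d" and b bbar :: "nat \<Rightarrow> real^'m"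
    and \<delta> :: "nat \<Rightarrow> real^'d^'m" and T E :: "nat \<Rightarrow> real"
  assumes hY: "Y = Wstar ** X"
    and hp: "p = rank Y"
    and hsig: "singular_values Y \<sigma>"
    and hsigX: "singular_values X \<sigma>X"
    and hr: "1 \<le> r" "r \<le> p"
    and hmin: "\<forall>k\<in>{1..r}. exact_rank1_min (seq_resid X Y a b (k - 1)) X (abar k) (bbar k)"
    and hdelta: "\<forall>k\<in>{1..r}. \<delta> k = outer (b k) (a k) - outer (bbar k) (abar k)"
    and hdelta0: "\<delta> 0 = 0"
    and hpos: "\<forall>k\<in>{1..r}. norm (\<delta> k) > 0"
    and hT: "\<forall>k\<in>{1..r}. T k = Tstar \<sigma> p k"
    and hE: "\<forall>k\<in>{1..r}. E k = \<sigma>X 1 * (\<Sum>k'=0..k-1. norm (\<delta> k') *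
                 (\<Prod>j\<in>{k'+1..k-1}. 2 + 6 * \<sigma> j / T k))"
    and hsmall: "\<forall>k\<in>{1..r}. \<forall>j. k < j \<and> j \<le> p \<longrightarrow> E k < 1/2 * \<bar>\<sigma> k - \<sigma> j\<bar>"
  shows "norm (Y - (\<Sum>k=1..r. outer (b k) (a k) ** X))
           \<le> (\<Sum>k=r+1..p. \<sigma> k)
             + \<sigma>X 1 * (\<Sum>k=1..r. \<Sum>k'=0..k. norm (\<delta> k') *
                 (\<Prod>j\<in>{k'+1..k}. 2 + 6 * \<sigma> j / T k))"
proof -
  define R where "R k = seq_resid X Y a b k" for k
  have RW: "R k = (Wstar - (\<Sum>i=1..k. outer (b i) (a i))) ** X" for k
    by (induction k) (simp_all add: R_def hY mm_diff mm_add algebra_simps)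
  have RY: "R k = Y - (\<Sum>i=1..k. outer (b i) (a i) ** X)" for k
    by (induction k) (simp_all add: R_def)
  have sX1: "0 \<le> \<sigma>X 1" using sv_nonneg[OF hsigX] by simp
  have main: "k \<le> r \<Longrightarrow> Phi (r - k) (R k) \<le> Phi r Y + \<sigma>X 1 * (\<Sum>i=1..k. norm (\<delta> i))" for k
  proof (induction k)
    case 0
    then show ?case by (simp add: R_def)
  next
    case (Suc k)
    define j where "j = Suc k"
    have jr: "j \<in> {1..r}" using Suc.prems by (simp add: j_def)
    define Bb where "Bb = outer (bbar j) (abar j) ** X"
    have opt: "exact_rank1_min (R k) X (abar j) (bbar j)"
      using hmin[rule_format, OF jr] by (simp add: R_def j_def)
    have "outer (b j) (a j) = \<delta> j + outer (bbar j) (abar j)" using hdelta jr by simp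
    then have "outer (b j) (a j) ** X = \<delta> j ** X + Bb" by (simp add: Bb_def mm_add)
    moreover have "R (Suc k) = R k - outer (b j) (a j) ** X" by (simp add: R_def j_def)
    ultimately have RS: "R (Suc k) = (R k - Bb) + (- (\<delta> j ** X))"
      by (simp add: algebra_simps)
    have "Phi (r - Suc k) (R (Suc k)) \<le> Phi (r - Suc k) (R k - Bb) + norm (\<delta> j ** X)"
      using Phi_pert[of "r - Suc k" "R k - Bb" "- (\<delta> j ** X)"] RS by simp
    also have "\<dots> \<le> Phi (Suc (r - Suc k)) (R k) + \<sigma>X 1 * norm (\<delta> j)"
      using Phi_step[OF RW opt, of "r - Suc k"] matX[OF hsigX, of "\<delta> j"] by (simp add: Bb_def)
    also have "Suc (r - Suc k) = r - k" using Suc.prems by simp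
    also have "Phi (r - k) (R k) + \<sigma>X 1 * norm (\<delta> j)
        \<le> Phi r Y + \<sigma>X 1 * (\<Sum>i=1..k. norm (\<delta> i)) + \<sigma>X 1 * norm (\<delta> j)"
      using Suc.IH Suc.prems by simp
    also have "\<dots> = Phi r Y + \<sigma>X 1 * (\<Sum>i=1..Suc k. norm (\<delta> i))"
      by (simp add: j_def algebra_simps)
    finally show ?case .
  qed
  have "norm (Y - (\<Sum>k=1..r. outer (b k) (a k) ** X)) = Phi 0 (R r)"
    by (simp add: Phi0 RY)
  also have "\<dots> \<le> Phi r Y + \<sigma>X 1 * (\<Sum>i=1..r. norm (\<delta> i))" using main[of r] by simp
  also have "Phi r Y \<le> (\<Sum>k=r+1..p. \<sigma> k)" using tail_bound[OF hsig] hr hp by simp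
  also have "\<sigma>X 1 * (\<Sum>i=1..r. norm (\<delta> i)) \<le> \<sigma>X 1 * (\<Sum>k=1..r. \<Sum>k'=0..k. norm (\<delta> k') *
                 (\<Prod>j\<in>{k'+1..k}. 2 + 6 * \<sigma> j / T k))"
  proof (rule mult_left_mono[OF sum_mono sX1])
    fix k assume k: "k \<in> {1..r}"
    have Tk: "0 \<le> T k"
    proof -
      have A: "{\<bar>\<sigma> k - \<sigma> j\<bar> | j. k < j \<and> j \<le> p} = (\<lambda>j. \<bar>\<sigma> k - \<sigma> j\<bar>) ` {k<..p}" by auto
      have sk: "0 \<le> \<sigma> k" using sv_nonneg[OF hsig] k by simp
      have "0 \<le> Min ({\<bar>\<sigma> k - \<sigma> j\<bar> | j. k < j \<and> j \<le> p} \<union> {\<sigma> k})"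
        unfolding A using sk by (subst Min_ge_iff) auto
      then show ?thesis using hT k by (simp add: Tstar_def)
    qed
    have fac: "0 \<le> 2 + 6 * \<sigma> j / T k" if "j \<in> {k'+1..k}" for j k'
      using sv_nonneg[OF hsig, of j] that Tk by simp
    have "norm (\<delta> k) = norm (\<delta> k) * (\<Prod>j\<in>{k+1..k}. 2 + 6 * \<sigma> j / T k)" by simp
    also have "\<dots> \<le> (\<Sum>k'=0..k. norm (\<delta> k') * (\<Prod>j\<in>{k'+1..k}. 2 + 6 * \<sigma> j / T k))"
      by (rule member_le_sum[where f="\<lambda>k'. norm (\<delta> k') * (\<Prod>j\<in>{k'+1..k}. 2 + 6 * \<sigma> j / T k)"])
         (auto intro!: mult_nonneg_nonneg prod_nonneg fac)
    finally show "norm (\<delta> k) \<le> (\<Sum>k'=0..k. norm (\<delta> k') * (\<Prod>j\<in>{k'+1..k}. 2 + 6 * \<sigma> j / T k))" .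
  qed
  finally show ?thesis by simp
qed

end
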